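(* No tree is H--cordial.
   Context: Graphs are finite and simple. A labeling of a graph $G$ is a map $f:E(G)\to\{-1,+1\}$. Given a labeling $f$, for each vertex $v$ define $f(v)=\sum_{e\in I(v)} f(e)$, where $I(v)$ is the set of edges incident to $v$. For an integer $c$, $e_f(c)$ denotes the number of edges with label $c$, and $v_f(c)$ the number of vertices $v$ with $f(v)=c$. A labeling $f$ is H--cordial if there is a positive constant $K$ such that $|f(v)|=K$ for every vertex $v$, $|e_f(1)-e_f(-1)|\le 1$, and $|v_f(K)-v_f(-K)|\le 1$. A graph is H--cordial if it admits an H--cordial labeling. *)

theory Defs
  imports Main
begin

definition simple_graph :: "'a set \<Rightarrow> 'a set set \<Rightarrow> bool" where
  "simple_graph V E \<longleftrightarrow> finite V \<and> (\<forall>e\<in>E. e \<subseteq> V \<and> card e = 2)"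

definition adj :: "'a set set \<Rightarrow> 'a \<Rightarrow> 'a \<Rightarrow> bool" where
  "adj E u v \<longleftrightarrow> {u, v} \<in> E"

definition connected_graph :: "'a set \<Rightarrow> 'a set set \<Rightarrow> bool" where
  "connected_graph V E \<longleftrightarrow> V \<noteq> {} \<and> (\<forall>u\<in>V. \<forall>v\<in>V. (adj E)\<^sup>*\<^sup>* u v)"

definition is_cycle :: "'a set set \<Rightarrow> 'a list \<Rightarrow> bool" where
  "is_cycle E cs \<longleftrightarrow> length cs \<ge> 3 \<and> distinct cs
     \<and> (\<forall>i. Suc i < length cs \<longrightarrow> adj E (cs ! i) (cs ! Suc i))
     \<and> adj E (last cs) (hd cs)"

definition acyclic_graph :: "'a set set \<Rightarrow> bool" where
  "acyclic_graph E \<longleftrightarrow> \<not> (\<exists>cs. is_cycle E cs)"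

definition is_tree :: "'a set \<Rightarrow> 'a set set \<Rightarrow> bool" where
  "is_tree V E \<longleftrightarrow> simple_graph V E \<and> connected_graph V E \<and> acyclic_graph E"

definition labeling :: "'a set set \<Rightarrow> ('a set \<Rightarrow> int) \<Rightarrow> bool" where
  "labeling E f \<longleftrightarrow> (\<forall>e\<in>E. f e \<in> {-1, 1})"

definition vlabel :: "'a set set \<Rightarrow> ('a set \<Rightarrow> int) \<Rightarrow> 'a \<Rightarrow> int" where
  "vlabel E f v = (\<Sum>e\<in>{e\<in>E. v \<in> e}. f e)"

definition e_count :: "'a set set \<Rightarrow> ('a set \<Rightarrow> int) \<Rightarrow> int \<Rightarrow> nat" where
  "e_count E f c = card {e\<in>E. f e = c}"

definition v_count :: "'a set \<Rightarrow> 'a set set \<Rightarrow> ('a set \<Rightarrow> int) \<Rightarrow> int \<Rightarrow> nat" where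
  "v_count V E f c = card {v\<in>V. vlabel E f v = c}"

definition H_cordial_labeling :: "'a set \<Rightarrow> 'a set set \<Rightarrow> ('a set \<Rightarrow> int) \<Rightarrow> bool" where
  "H_cordial_labeling V E f \<longleftrightarrow> labeling E f \<and>
     (\<exists>K::int. K > 0 \<and> (\<forall>v\<in>V. \<bar>vlabel E f v\<bar> = K)
        \<and> \<bar>int (e_count E f 1) - int (e_count E f (-1))\<bar> \<le> 1
        \<and> \<bar>int (v_count V E f K) - int (v_count V E f (-K))\<bar> \<le> 1)"

definition H_cordial :: "'a set \<Rightarrow> 'a set set \<Rightarrow> bool" where
  "H_cordial V E \<longleftrightarrow> (\<exists>f. H_cordial_labeling V E f)"

end

theory Submission
  imports Defs
begin

definition gpath :: "'a set \<Rightarrow> 'a set set \<Rightarrow> 'a list \<Rightarrow> bool" where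
  "gpath V E cs \<longleftrightarrow> distinct cs \<and> set cs \<subseteq> V \<and> length cs \<ge> 2
     \<and> (\<forall>i. Suc i < length cs \<longrightarrow> adj E (cs ! i) (cs ! Suc i))"

lemma leaf_exists:
  assumes sg: "simple_graph V E" and ac: "acyclic_graph E" and ne: "E \<noteq> {}"
  shows "\<exists>v p. {p, v} \<in> E \<and> (\<forall>e\<in>E. v \<in> e \<longrightarrow> e = {p, v})"
proof -
  have fin: "finite V" using sg by (simp add: simple_graph_def)
  obtain e0 where e0: "e0 \<in> E" using ne by blast
  then have "card e0 = 2" "e0 \<subseteq> V" using sg by (auto simp: simple_graph_def)
  then obtain x y where xy: "e0 = {x, y}" "x \<noteq> y" by (auto simp: card_Suc_eq numeral_2_eq_2)
  have "gpath V E [x, y]" using xy e0 \<open>e0 \<subseteq> V\<close>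
    by (auto simp: gpath_def adj_def less_Suc_eq)
  then have P0: "\<exists>cs. gpath V E cs \<and> length cs = 2" by auto
  have bnd: "\<forall>n. (\<exists>cs. gpath V E cs \<and> length cs = n) \<longrightarrow> n \<le> card V"
  proof (intro allI impI)
    fix n assume "\<exists>cs. gpath V E cs \<and> length cs = n"
    then obtain cs where "gpath V E cs" "length cs = n" by blast
    then show "n \<le> card V"
      by (metis card_mono distinct_card fin gpath_def)
  qed
  obtain m where m: "\<exists>cs. gpath V E cs \<and> length cs = m"
    and mmax: "\<forall>n. (\<exists>cs. gpath V E cs \<and> length cs = n) \<longrightarrow> n \<le> m"
    using Nat.ex_has_greatest_nat[of "\<lambda>n. \<exists>cs. gpath V E cs \<and> length cs = n", OF P0 bnd] by blast
  obtain cs where cs: "gpath V E cs" "length cs = m" using m by blast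
  define v where "v = cs ! 0"
  define p where "p = cs ! 1"
  have len: "length cs \<ge> 2" using cs by (simp add: gpath_def)
  have dist: "distinct cs" using cs by (simp add: gpath_def)
  have adjc: "\<And>i. Suc i < length cs \<Longrightarrow> adj E (cs ! i) (cs ! Suc i)" using cs by (simp add: gpath_def)
  have "adj E v p" using adjc[of 0] len by (simp add: v_def p_def)
  then have pv: "{p, v} \<in> E" by (simp add: adj_def insert_commute)
  have "\<forall>e\<in>E. v \<in> e \<longrightarrow> e = {p, v}"
  proof (intro ballI impI)
    fix e assume eE: "e \<in> E" and ve: "v \<in> e"
    have "card e = 2" "e \<subseteq> V" using sg eE by (auto simp: simple_graph_def)
    then obtain w where ew: "e = {v, w}" "w \<noteq> v" using ve
      by (auto simp: card_Suc_eq numeral_2_eq_2)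
    show "e = {p, v}"
    proof (cases "w \<in> set cs")
      case False
      have "gpath V E (w # cs)"
        unfolding gpath_def
      proof (intro conjI allI impI)
        show "distinct (w # cs)" using False dist by simp
        show "set (w # cs) \<subseteq> V" using cs \<open>e \<subseteq> V\<close> ew by (auto simp: gpath_def)
        show "2 \<le> length (w # cs)" using len by simp
        fix i assume i: "Suc i < length (w # cs)"
        show "adj E ((w # cs) ! i) ((w # cs) ! Suc i)"
        proof (cases i)
          case 0 then show ?thesis using eE ew by (simp add: adj_def v_def insert_commute)
        next
          case (Suc j) then show ?thesis using adjc[of j] i by simp
        qed
      qed
      then have "length (w # cs) \<le> m" using mmax by blast
      then show ?thesis using cs by simp
    next
      case True
      then obtain i where i: "i < length cs" "cs ! i = w" by (metis in_set_conv_nth)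
      have "i \<noteq> 0" using i ew by (auto simp: v_def) (metis gr0I)
      show ?thesis
      proof (cases "i = 1")
        case True then show ?thesis using i ew by (auto simp: p_def)
      next
        case False
        have "is_cycle E (take (Suc i) cs)"
          unfolding is_cycle_def
        proof (intro conjI allI impI)
          show "3 \<le> length (take (Suc i) cs)" using False \<open>i \<noteq> 0\<close> i by simp
          show "distinct (take (Suc i) cs)" using dist by simp
          fix k assume "Suc k < length (take (Suc i) cs)"
          then show "adj E (take (Suc i) cs ! k) (take (Suc i) cs ! Suc k)"
            using adjc[of k] by simp
        next
          have "last (take (Suc i) cs) = w" using i by (simp add: take_Suc_conv_app_nth)
          moreover have "hd (take (Suc i) cs) = v" using i by (cases cs) (simp_all add: v_def)
          ultimately show "adj E (last (take (Suc i) cs)) (hd (take (Suc i) cs))"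
            using eE ew by (simp add: adj_def insert_commute)
        qed
        then show ?thesis using ac by (auto simp: acyclic_graph_def)
      qed
    qed
  qed
  then show ?thesis using pv by blast
qed

lemma tree_card:
  "simple_graph V E \<Longrightarrow> connected_graph V E \<Longrightarrow> acyclic_graph E \<Longrightarrow> card E + 1 = card V"
proof (induction "card V" arbitrary: V E rule: less_induct)
  case less
  have fin: "finite V" using less.prems by (simp add: simple_graph_def)
  show ?case
  proof (cases "E = {}")
    case True
    obtain u where u: "u \<in> V" using less.prems(2) by (auto simp: connected_graph_def)
    have "\<And>w. w \<in> V \<Longrightarrow> w = u"
    proof -
      fix w assume "w \<in> V"
      then have "(adj E)\<^sup>*\<^sup>* u w" using u less.prems(2) by (auto simp: connected_graph_def)
      moreover have "adj E = (\<lambda>a b. False)" using True by (auto simp: adj_def fun_eq_iff)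
      ultimately show "w = u" by (metis rtranclp.cases)
    qed
    then have "V = {u}" using u by blast
    then show ?thesis using True by simp
  next
    case False
    obtain v p where pv: "{p, v} \<in> E" and lf: "\<forall>e\<in>E. v \<in> e \<longrightarrow> e = {p, v}"
      using leaf_exists[OF less.prems(1) less.prems(3) False] by blast
    have "card {p, v} = 2" "{p, v} \<subseteq> V" using pv less.prems(1) by (auto simp: simple_graph_def)
    then have pnv: "p \<noteq> v" and pV: "p \<in> V" and vV: "v \<in> V" by auto
    define V' where "V' = V - {v}"
    define E' where "E' = E - {{p, v}}"
    have sg': "simple_graph V' E'"
      unfolding simple_graph_def
    proof (intro conjI ballI)
      show "finite V'" using fin by (simp add: V'_def)
      fix e assume e: "e \<in> E'"
      then have eE: "e \<in> E" and ne: "e \<noteq> {p, v}" by (auto simp: E'_def)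
      then have "v \<notin> e" using lf by blast
      then show "e \<subseteq> V'" using eE less.prems(1) by (auto simp: V'_def simple_graph_def)
      show "card e = 2" using eE less.prems(1) by (auto simp: simple_graph_def)
    qed
    have adjm: "\<And>a b. adj E' a b \<Longrightarrow> adj E a b" by (auto simp: adj_def E'_def)
    have ac': "acyclic_graph E'"
      unfolding acyclic_graph_def
    proof
      assume "\<exists>cs. is_cycle E' cs"
      then obtain cs where "is_cycle E' cs" by blast
      then have "is_cycle E cs" using adjm unfolding is_cycle_def by blast
      then show False using less.prems(3) by (auto simp: acyclic_graph_def)
    qed
    have key: "(adj E)\<^sup>*\<^sup>* u z \<Longrightarrow> u \<noteq> v \<Longrightarrow> (adj E')\<^sup>*\<^sup>* u (if z = v then p else z)" for u z
    proof (induction rule: rtranclp_induct)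
      case base then show ?case by simp
    next
      case (step y z)
      have yz: "{y, z} \<in> E" using step.hyps(2) by (simp add: adj_def)
      show ?case
      proof (cases "y = v")
        case yv: True
        show ?thesis
        proof (cases "z = v")
          case True then show ?thesis using step yv by simp
        next
          case False
          have "{y, z} = {p, v}" using lf yz yv by auto
          then have "z = p" using False yv by (auto simp: doubleton_eq_iff)
          then show ?thesis using step yv False by simp
        qed
      next
        case ynv: False
        show ?thesis
        proof (cases "z = v")
          case True
          have "{y, z} = {p, v}" using lf yz True by auto
          then have "y = p" using True ynv by (auto simp: doubleton_eq_iff)
          then show ?thesis using step ynv True by simp
        next
          case False
          have "{y, z} \<noteq> {p, v}" using False ynv by (auto simp: doubleton_eq_iff)
          then have "adj E' y z" using yz by (simp add: adj_def E'_def)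
          then show ?thesis using step ynv False
            by (simp add: rtranclp.rtrancl_into_rtrancl)
        qed
      qed
    qed
    have con': "connected_graph V' E'"
      unfolding connected_graph_def
    proof (intro conjI ballI)
      show "V' \<noteq> {}" using pV pnv by (auto simp: V'_def)
      fix a b assume a: "a \<in> V'" and b: "b \<in> V'"
      then have "(adj E)\<^sup>*\<^sup>* a b" using less.prems(2) by (auto simp: connected_graph_def V'_def)
      from key[OF this] show "(adj E')\<^sup>*\<^sup>* a b" using a b by (auto simp: V'_def)
    qed
    have cV: "card V' = card V - 1" using vV fin by (simp add: V'_def)
    have "card V \<ge> 2"
    proof -
      have "{p, v} \<subseteq> V" using pV vV by auto
      then have "card {p, v} \<le> card V" using card_mono[OF fin] by blast
      then show ?thesis using pnv by simp
    qed
    have finE: "finite E" using less.prems(1) fin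
      by (metis Pow_iff finite_Pow_iff rev_finite_subset simple_graph_def subsetI)
    have cE: "card E' = card E - 1" using pv finE by (simp add: E'_def)
    have "card E' + 1 = card V'"
      using less.hyps[OF _ sg' con' ac'] cV \<open>card V \<ge> 2\<close> by simp
    moreover have "card E \<ge> 1" using pv finE
      by (metis One_nat_def Suc_leI card_gt_0_iff empty_iff)
    ultimately show ?thesis using cE cV \<open>card V \<ge> 2\<close> by linarith
  qed
qed

lemma arith_contra:
  fixes a b c d K :: int
  assumes "a + b = c + d + 1" "K * (a - b) = 2 * (c - d)" "\<bar>c - d\<bar> \<le> 1" "\<bar>a - b\<bar> \<le> 1" "K > 0"
  shows False
proof -
  have "a - b = 0 \<or> a - b = 1 \<or> a - b = -1" using assms(4) by linarith
  then show False
  proof (elim disjE)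
    assume h: "a - b = 0"
    then show False using assms by presburger
  next
    assume h: "a - b = 1"
    then have "K = 2 * (c - d)" using assms(2) by simp
    then show False using assms h by presburger
  next
    assume h: "a - b = -1"
    then have "K = - 2 * (c - d)" using assms(2) by simp
    then show False using assms h by presburger
  qed
qed

theorem corollary1:
  fixes V :: "'a set" and E :: "'a set set"
  assumes "is_tree V E"
  shows "\<not> H_cordial V E"
proof
  assume "H_cordial V E"
  then obtain f K where lab: "labeling E f" and K: "K > 0"
    and allK: "\<forall>v\<in>V. \<bar>vlabel E f v\<bar> = K"
    and ec: "\<bar>int (e_count E f 1) - int (e_count E f (-1))\<bar> \<le> 1"
    and vc: "\<bar>int (v_count V E f K) - int (v_count V E f (-K))\<bar> \<le> 1"
    by (auto simp: H_cordial_def H_cordial_labeling_def)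
  have sg: "simple_graph V E" and con: "connected_graph V E" and ac: "acyclic_graph E"
    using assms by (auto simp: is_tree_def)
  have tc: "card E + 1 = card V" using tree_card[OF sg con ac] .
  have fin: "finite V" using sg by (simp add: simple_graph_def)
  have finE: "finite E" using sg fin
    by (metis Pow_iff finite_Pow_iff rev_finite_subset simple_graph_def subsetI)
  define A where "A = {v\<in>V. vlabel E f v = K}"
  define B where "B = {v\<in>V. vlabel E f v = -K}"
  define C where "C = {e\<in>E. f e = 1}"
  define D where "D = {e\<in>E. f e = -1}"
  have VAB: "V = A \<union> B" using allK by (auto simp: A_def B_def abs_if split: if_splits)
  have AB: "A \<inter> B = {}" using K by (auto simp: A_def B_def)
  have ECD: "E = C \<union> D" using lab by (auto simp: C_def D_def labeling_def)
  have CD: "C \<inter> D = {}" by (auto simp: C_def D_def)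
  have finA: "finite A" "finite B" using fin by (auto simp: A_def B_def)
  have finC: "finite C" "finite D" using finE by (auto simp: C_def D_def)
  have cardV: "int (card V) = int (card A) + int (card B)"
    using VAB AB finA card_Un_disjoint by fastforce
  have cardE: "int (card E) = int (card C) + int (card D)"
    using ECD CD finC card_Un_disjoint by fastforce
  have sumV: "(\<Sum>v\<in>V. vlabel E f v) = K * (int (card A) - int (card B))"
  proof -
    have "(\<Sum>v\<in>V. vlabel E f v) = (\<Sum>v\<in>A. vlabel E f v) + (\<Sum>v\<in>B. vlabel E f v)"
      using VAB AB finA sum.union_disjoint by metis
    also have "(\<Sum>v\<in>A. vlabel E f v) = (\<Sum>v\<in>A. K)" by (rule sum.cong) (auto simp: A_def)
    also have "(\<Sum>v\<in>B. vlabel E f v) = (\<Sum>v\<in>B. -K)" by (rule sum.cong) (auto simp: B_def)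
    finally show ?thesis by (simp add: algebra_simps)
  qed
  have sumE: "(\<Sum>e\<in>E. f e) = int (card C) - int (card D)"
  proof -
    have "(\<Sum>e\<in>E. f e) = (\<Sum>e\<in>C. f e) + (\<Sum>e\<in>D. f e)"
      using ECD CD finC sum.union_disjoint by metis
    also have "(\<Sum>e\<in>C. f e) = (\<Sum>e\<in>C. 1)" by (rule sum.cong) (auto simp: C_def)
    also have "(\<Sum>e\<in>D. f e) = (\<Sum>e\<in>D. -1)" by (rule sum.cong) (auto simp: D_def)
    finally show ?thesis by simp
  qed
  have dbl: "(\<Sum>v\<in>V. vlabel E f v) = 2 * (\<Sum>e\<in>E. f e)"
  proof -
    have "(\<Sum>v\<in>V. vlabel E f v) = (\<Sum>v\<in>V. \<Sum>e\<in>{e\<in>E. v \<in> e}. f e)"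
      by (simp add: vlabel_def)
    also have "\<dots> = (\<Sum>e\<in>E. \<Sum>v\<in>{v\<in>V. v \<in> e}. f e)"
      by (rule sum.swap_restrict[OF fin finE])
    also have "\<dots> = (\<Sum>e\<in>E. 2 * f e)"
    proof (rule sum.cong)
      fix e assume "e \<in> E"
      then have "{v\<in>V. v \<in> e} = e" "card e = 2" using sg by (auto simp: simple_graph_def)
      then show "(\<Sum>v\<in>{v\<in>V. v \<in> e}. f e) = 2 * f e" by simp
    qed simp
    finally show ?thesis by (simp add: sum_distrib_left)
  qed
  show False
    using arith_contra[of "int (card A)" "int (card B)" "int (card C)" "int (card D)" K]
      tc cardV cardE sumV sumE dbl K ec vc
    by (simp add: e_count_def v_count_def A_def B_def C_def D_def)
qed

end
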